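(* Let $S$ be a left I-order in an inverse semigroup $Q$. Then $S$ is straight in $Q$ if and only if $S$ intersects every $\mathcal{L}$-class of $Q$.
   Context: For an element $a$ of an inverse semigroup $Q$, $a^{-1}$ is its unique inverse. A subsemigroup $S$ of $Q$ is a left I-order in $Q$ if every $q\in Q$ can be written $q=a^{-1}b$ with $a,b\in S$; it is straight in $Q$ if $a,b$ can always be chosen with $a\,\mathcal{R}\,b$ in $Q$. $\mathcal{L},\mathcal{R}$ are Green's relations of $Q$. *)

theory Defs
  imports Main
begin

text \<open>The inverse semigroup Q is the whole type 'a (a semigroup under *).
  Q is inverse if every element has a unique inverse.\<close>

definition inverse_semigroup :: "'a::semigroup_mult itself \<Rightarrow> bool" where
  "inverse_semigroup T \<longleftrightarrow> (\<forall>a::'a. \<exists>!b. a * b * a = a \<and> b * a * b = b)"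

definition sinv :: "'a::semigroup_mult \<Rightarrow> 'a" where
  "sinv a = (THE b. a * b * a = a \<and> b * a * b = b)"

definition subsemigroup :: "'a::semigroup_mult set \<Rightarrow> bool" where
  "subsemigroup S \<longleftrightarrow> (\<forall>a\<in>S. \<forall>b\<in>S. a * b \<in> S)"

text \<open>Green's relations of Q: a L b iff Q^1 a = Q^1 b; a R b iff a Q^1 = b Q^1.\<close>

definition greenL :: "'a::semigroup_mult \<Rightarrow> 'a \<Rightarrow> bool" where
  "greenL a b \<longleftrightarrow> insert a {x * a | x. True} = insert b {x * b | x. True}"

definition greenR :: "'a::semigroup_mult \<Rightarrow> 'a \<Rightarrow> bool" where
  "greenR a b \<longleftrightarrow> insert a {a * x | x. True} = insert b {b * x | x. True}"

definition left_I_order :: "'a::semigroup_mult set \<Rightarrow> bool" where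
  "left_I_order S \<longleftrightarrow> subsemigroup S \<and> (\<forall>q. \<exists>a\<in>S. \<exists>b\<in>S. q = sinv a * b)"

definition straight_left_I_order :: "'a::semigroup_mult set \<Rightarrow> bool" where
  "straight_left_I_order S \<longleftrightarrow> (\<forall>q. \<exists>a\<in>S. \<exists>b\<in>S. q = sinv a * b \<and> greenR a b)"

end

theory Submission
  imports Defs
begin

lemma inv_ax:
  assumes "inverse_semigroup TYPE('a::semigroup_mult)"
  shows "(a::'a) * sinv a * a = a \<and> sinv a * a * sinv a = sinv a"
proof -
  have "\<exists>!b. a * b * a = a \<and> b * a * b = b" using assms unfolding inverse_semigroup_def by blast
  then show ?thesis unfolding sinv_def by (rule theI')
qed

lemma inv_uniq:
  assumes "inverse_semigroup TYPE('a::semigroup_mult)"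
    and "(a::'a) * b * a = a" and "b * a * b = b"
  shows "sinv a = b"
proof -
  have u: "\<exists>!b. a * b * a = a \<and> b * a * b = b" using assms(1) unfolding inverse_semigroup_def by blast
  have "a * sinv a * a = a \<and> sinv a * a * sinv a = sinv a" using inv_ax[OF assms(1)] .
  with u assms(2,3) show ?thesis by blast
qed

lemma idem_inv:
  assumes "inverse_semigroup TYPE('a::semigroup_mult)" and "(e::'a) * e = e"
  shows "sinv e = e"
  using inv_uniq[OF assms(1)] assms(2) by metis

lemma idem_prod:
  assumes I: "inverse_semigroup TYPE('a::semigroup_mult)" and e: "(e::'a) * e = e" and f: "f * f = f"
  shows "e * f * (e * f) = e * f"
proof -
  define x where "x = sinv (e * f)"
  have x1: "e * f * x * (e * f) = e * f" and x2: "x * (e * f) * x = x"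
    using inv_ax[OF I, of "e*f"] x_def by auto
  have a: "e * f * (f * x * e) * (e * f) = e * f"
    using x1 e f by (metis mult.assoc)
  have b: "(f * x * e) * (e * f) * (f * x * e) = f * x * e"
  proof -
    have "(f * x * e) * (e * f) * (f * x * e) = f * (x * (e * f) * x) * e"
      using e f by (metis mult.assoc)
    then show ?thesis using x2 by simp
  qed
  have fxe: "f * x * e = x" using inv_uniq[OF I a b] x_def by simp
  have xx: "x * x = x"
  proof -
    have "x * x = (f * x * e) * (f * x * e)" using fxe by simp
    also have "\<dots> = f * (x * (e * f) * x) * e" by (simp add: mult.assoc)
    also have "\<dots> = x" using x2 fxe by simp
    finally show ?thesis .
  qed
  have "sinv x = e * f"
    using inv_uniq[OF I, of x "e*f"] x1 x2 by (simp add: mult.assoc)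
  moreover have "sinv x = x" using idem_inv[OF I xx] .
  ultimately have "e * f = x" by simp
  then show ?thesis using xx by simp
qed

lemma idem_comm:
  assumes I: "inverse_semigroup TYPE('a::semigroup_mult)" and e: "(e::'a) * e = e" and f: "f * f = f"
  shows "e * f = f * e"
proof -
  have ef: "e * f * (e * f) = e * f" using idem_prod[OF I e f] .
  have fe: "f * e * (f * e) = f * e" using idem_prod[OF I f e] .
  have "e * f * (f * e) * (e * f) = e * f"
    using ef e f by (metis mult.assoc)
  moreover have "f * e * (e * f) * (f * e) = f * e"
    using fe e f by (metis mult.assoc)
  ultimately have "sinv (e * f) = f * e" using inv_uniq[OF I] by blast
  moreover have "sinv (e * f) = e * f" using idem_inv[OF I ef] .
  ultimately show ?thesis by simp
qed

lemma idem1: "inverse_semigroup TYPE('a::semigroup_mult) \<Longrightarrow> (a::'a) * sinv a * (a * sinv a) = a * sinv a"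
  using inv_ax[of a] by (metis mult.assoc)

lemma idem2: "inverse_semigroup TYPE('a::semigroup_mult) \<Longrightarrow> sinv (a::'a) * a * (sinv a * a) = sinv a * a"
  using inv_ax[of a] by (metis mult.assoc)

theorem lemma2p1:
  fixes S :: "'a::semigroup_mult set"
  assumes "inverse_semigroup TYPE('a)"
    and "left_I_order S"
  shows "straight_left_I_order S \<longleftrightarrow> (\<forall>q::'a. \<exists>s\<in>S. greenL s q)"
proof
  assume st: "straight_left_I_order S"
  show "\<forall>q::'a. \<exists>s\<in>S. greenL s q"
  proof
    fix q :: 'a
    obtain a b where ab: "a \<in> S" "b \<in> S" "q = sinv a * b" "greenR a b"
      using st unfolding straight_left_I_order_def by blast
    have "b \<in> insert a {a * x | x. True}" using ab(4) unfolding greenR_def by blast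
    then obtain x where "b = a \<or> b = a * x" by blast
    then have "a * sinv a * b = b" using inv_ax[OF assms(1), of a] by (metis mult.assoc)
    then have bq: "b = a * q" using ab(3) by (simp add: mult.assoc)
    have "greenL b q" unfolding greenL_def
    proof
      show "insert b {x * b |x. True} \<subseteq> insert q {x * q |x. True}"
        using bq by (auto, metis mult.assoc)
      show "insert q {x * q |x. True} \<subseteq> insert b {x * b |x. True}"
        using ab(3) by (auto, metis mult.assoc)
    qed
    then show "\<exists>s\<in>S. greenL s q" using ab(2) by blast
  qed
next
  assume L: "\<forall>q::'a. \<exists>s\<in>S. greenL s q"
  have I: "inverse_semigroup TYPE('a)" by fact
  have sub: "subsemigroup S" and ord: "\<forall>q. \<exists>a\<in>S. \<exists>b\<in>S. q = sinv a * b"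
    using assms(2) unfolding left_I_order_def by auto
  show "straight_left_I_order S" unfolding straight_left_I_order_def
  proof
    fix q :: 'a
    obtain a b where ab: "a \<in> S" "b \<in> S" "q = sinv a * b" using ord by blast
    define ea where "ea = a * sinv a"
    define eb where "eb = b * sinv b"
    define e where "e = ea * eb"
    have ea: "ea * ea = ea" using idem1[OF I] ea_def by simp
    have eb: "eb * eb = eb" using idem1[OF I] eb_def by simp
    have e: "e * e = e" using idem_prod[OF I ea eb] e_def by simp
    obtain u where u: "u \<in> S" "greenL u e" using L by blast
    have "u \<in> insert e {x * e | x. True}" using u(2) unfolding greenL_def by blast
    then obtain x where "u = e \<or> u = x * e" by blast
    then have ue: "u * e = u" using e by (metis mult.assoc)
    have "e \<in> insert u {x * u | x. True}" using u(2) unfolding greenL_def by blast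
    then obtain y where "e = u \<or> e = y * u" by blast
    then have euu: "e * (sinv u * u) = e" using inv_ax[OF I, of u] by (metis mult.assoc)
    define f where "f = sinv u * u"
    have f: "f * f = f" using idem2[OF I] f_def by simp
    have "f * e = f" using ue f_def by (simp add: mult.assoc)
    then have fe: "sinv u * u = e" using idem_comm[OF I e f] euu f_def by simp
    have fe2: "\<And>z. sinv u * (u * z) = e * z" using fe by (metis mult.assoc)
    define c where "c = u * a"
    define d where "d = u * b"
    have cS: "c \<in> S" and dS: "d \<in> S" using sub u(1) ab unfolding subsemigroup_def c_def d_def by auto
    have ia: "a * sinv a * a = a" "sinv a * a * sinv a = sinv a" using inv_ax[OF I, of a] by auto
    have ib: "b * sinv b * b = b" "sinv b * b * sinv b = sinv b" using inv_ax[OF I, of b] by auto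
    have iu: "u * sinv u * u = u" "sinv u * u * sinv u = sinv u" using inv_ax[OF I, of u] by auto
    have eea: "e * ea = e" using e_def ea eb idem_comm[OF I ea eb] by (metis mult.assoc)
    have eaa: "ea * a = a" using ia ea_def by simp
    have ebb: "eb * b = b" using ib eb_def by simp
    have "e * a = eb * a"
      using idem_comm[OF I ea eb] e_def eaa by (metis mult.assoc)
    have d1: "d = c * (sinv a * b)"
    proof -
      have "d = u * e * b" using ue d_def by simp
      also have "\<dots> = u * ea * b" using e_def ebb by (simp add: mult.assoc)
      finally show ?thesis using c_def ea_def by (simp add: mult.assoc)
    qed
    have c1: "c = d * (sinv b * a)"
    proof -
      have "c = u * e * a" using ue c_def by simp
      also have "\<dots> = u * eb * a" using \<open>e * a = eb * a\<close> by (simp add: mult.assoc)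
      finally show ?thesis using d_def eb_def by (simp add: mult.assoc)
    qed
    have R: "greenR c d" unfolding greenR_def
    proof
      show "insert c {c * x |x. True} \<subseteq> insert d {d * x |x. True}"
        using c1 by (auto simp: mult.assoc)
      show "insert d {d * x |x. True} \<subseteq> insert c {c * x |x. True}"
        using d1 by (auto simp: mult.assoc)
    qed
    have eu: "e * sinv u = sinv u" using fe iu(2) by simp
    have ic: "sinv c = sinv a * sinv u"
    proof (rule inv_uniq[OF I])
      have "c * (sinv a * sinv u) * c = u * (ea * e) * a"
        using c_def ea_def fe fe2 by (simp add: mult.assoc)
      also have "\<dots> = u * e * a" using eea idem_comm[OF I ea e] by simp
      also have "\<dots> = c" using ue c_def by simp
      finally show "c * (sinv a * sinv u) * c = c" .
      have "sinv a * sinv u * c * (sinv a * sinv u) = sinv a * (e * ea) * sinv u"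
        using c_def ea_def fe fe2 by (simp add: mult.assoc)
      also have "\<dots> = sinv a * ea * e * sinv u" using eea idem_comm[OF I ea e] by (simp add: mult.assoc)
      also have "\<dots> = sinv a * sinv u" using eu ia(2) ea_def by (simp add: mult.assoc)
      finally show "sinv a * sinv u * c * (sinv a * sinv u) = sinv a * sinv u" .
    qed
    have "sinv c * d = sinv a * (e * b)" using ic d_def fe fe2 by (simp add: mult.assoc)
    also have "\<dots> = sinv a * ea * b" using e_def ebb ea_def by (simp add: mult.assoc)
    also have "\<dots> = q" using ab(3) ia(2) ea_def by (simp add: mult.assoc)
    finally show "\<exists>a\<in>S. \<exists>b\<in>S. q = sinv a * b \<and> greenR a b" using cS dS R by metis
  qed
qed

end
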